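(* Consider the system $$x'=y,\qquad y'=\rho z^2\cos x+(z^2+\kappa)\sin x\cos x-\sin x-\varepsilon y,\qquad z'=\alpha(\cos x-\beta)$$ with $\rho=0$, $\beta\in(0,1)$, $\alpha>0$ and $\kappa\in[0,1)$. Then: (i) the equilibrium point is $P_0=\big(\arccos\beta,\,0,\,(1/\beta-\kappa)^{1/2}\big)$; (ii) the critical value is $\varepsilon_c=2\alpha\beta^{3/2}(1-\kappa\beta)^{1/2}$; (iii) at $\varepsilon=\varepsilon_c$, the first Lyapunov coefficient $l_1(\beta,\alpha,0,\kappa)$ at $P_0$ vanishes if and only if $G_1(\beta,\alpha,\kappa)=0$, where $$G_1(\beta,\alpha,\kappa)=-3+5\kappa\beta-(\alpha^2-5)\beta^2+\kappa(\alpha^2-7)\beta^3-2\alpha^2\kappa^2\beta^4-(\alpha^4-2\alpha^2\kappa^2)\beta^6+\alpha^4\kappa\beta^7.$$ Consequently, if $G_1(\beta,\alpha,\kappa)\neq0$, then the family (with parameter $\varepsilon$) has a transversal Hopf point at $P_0$ for $\varepsilon=\varepsilon_c$ with nonzero first Lyapunov coefficient.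
   Context: In general, for $\rho\ge0$, the equilibrium point and critical value are $$P_0=\Big(\arccos\beta,0,\frac{(1-\kappa\beta)^{1/2}(1-\beta^2)^{1/4}}{\beta^{1/2}(\rho+(1-\beta^2)^{1/2})^{1/2}}\Big),\qquad \varepsilon_c=\frac{2\alpha\beta^{3/2}(1-\beta^2)^{3/4}(1-\kappa\beta)^{1/2}(\rho+(1-\beta^2)^{1/2})^{3/2}}{(1-\beta^2)^{3/2}+\rho(1-\kappa\beta^3)}.$$ The frequency is $$\omega_0=\sqrt{\frac{(1-\beta^2)^{3/2}+\rho(1-\kappa\beta^3)}{\beta(\rho+(1-\beta^2)^{1/2})}},\qquad \omega_1=\sqrt{(1-\beta^2)/\beta}.$$ At $\varepsilon=\varepsilon_c$, the Jacobian $A=Df(P_0)$ has eigenvalues $-\varepsilon_c$ and $\pm i\omega_0$. First Lyapunov coefficient. Let $B$ and $C$ be the second- and third-derivative multilinear forms of the vector field $f$ at $P_0$. Take $q=(-i,\omega_0,\alpha\beta^{1/2}\omega_1/\omega_0)$, and let $p$ satisfy $A^{\top}p=-i\omega_0p$ and $\sum_i\bar p_iq_i=1$. Set $$G_{21}=\langle p,C(q,q,\bar q)+B(\bar q,(2i\omega_0I-A)^{-1}B(q,q))-2B(q,A^{-1}B(q,\bar q))\rangle.$$ Then $l_1=\operatorname{Re}G_{21}/(2\omega_0)$. A Hopf point is an equilibrium whose Jacobian has a pair of purely imaginary eigenvalues $\pm i\omega_0$, $\omega_0>0$, and no other eigenvalues on the imaginary axis. It is transversal if the real part of the continued complex pair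 has nonzero derivative with respect to the parameter ($\varepsilon$ here). *)

theory Defs
  imports "HOL-Analysis.Analysis"
begin

definition sys :: "real \<Rightarrow> real \<Rightarrow> real \<Rightarrow> real \<Rightarrow> real \<Rightarrow> real^3 \<Rightarrow> real^3" where
  "sys \<rho> \<kappa> \<alpha> \<beta> \<epsilon> X =
     vector [X$2,
             \<rho> * (X$3)^2 * cos (X$1) + ((X$3)^2 + \<kappa>) * sin (X$1) * cos (X$1) - sin (X$1) - \<epsilon> * X$2,
             \<alpha> * (cos (X$1) - \<beta>)]"

definition pd1 :: "(real^'n \<Rightarrow> real) \<Rightarrow> real^'n \<Rightarrow> 'n \<Rightarrow> real" where
  "pd1 g x j = deriv (\<lambda>t. g (x + t *\<^sub>R axis j 1)) 0"

definition pd2 :: "(real^'n \<Rightarrow> real) \<Rightarrow> real^'n \<Rightarrow> 'n \<Rightarrow> 'n \<Rightarrow> real" where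
  "pd2 g x j k = pd1 (\<lambda>y. pd1 g y j) x k"

definition pd3 :: "(real^'n \<Rightarrow> real) \<Rightarrow> real^'n \<Rightarrow> 'n \<Rightarrow> 'n \<Rightarrow> 'n \<Rightarrow> real" where
  "pd3 g x j k l = pd1 (\<lambda>y. pd2 g y j k) x l"

definition jac :: "(real^'n \<Rightarrow> real^'n) \<Rightarrow> real^'n \<Rightarrow> real^'n^'n" where
  "jac F x = (\<chi> i j. pd1 (\<lambda>y. F y $ i) x j)"

definition Bform :: "(real^'n \<Rightarrow> real^'n) \<Rightarrow> real^'n \<Rightarrow> complex^'n \<Rightarrow> complex^'n \<Rightarrow> complex^'n" where
  "Bform F x u v = (\<chi> i. \<Sum>j\<in>UNIV. \<Sum>k\<in>UNIV.
      complex_of_real (pd2 (\<lambda>y. F y $ i) x j k) * u$j * v$k)"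

definition Cform :: "(real^'n \<Rightarrow> real^'n) \<Rightarrow> real^'n \<Rightarrow> complex^'n \<Rightarrow> complex^'n \<Rightarrow> complex^'n \<Rightarrow> complex^'n" where
  "Cform F x u v w = (\<chi> i. \<Sum>j\<in>UNIV. \<Sum>k\<in>UNIV. \<Sum>l\<in>UNIV.
      complex_of_real (pd3 (\<lambda>y. F y $ i) x j k l) * u$j * v$k * w$l)"

definition cmat :: "real^'n^'m \<Rightarrow> complex^'n^'m" where
  "cmat A = (\<chi> i j. complex_of_real (A$i$j))"

definition cvec_cnj :: "complex^'n \<Rightarrow> complex^'n" where
  "cvec_cnj v = (\<chi> i. cnj (v$i))"

definition cpair :: "complex^'n \<Rightarrow> complex^'n \<Rightarrow> complex" where
  "cpair p v = (\<Sum>i\<in>UNIV. cnj (p$i) * v$i)"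

definition is_eigenvalue :: "complex^'n^'n \<Rightarrow> complex \<Rightarrow> bool" where
  "is_eigenvalue M \<mu> \<longleftrightarrow> (\<exists>v. v \<noteq> 0 \<and> M *v v = \<mu> *s v)"

definition hopf_jacobian :: "real^'n^'n \<Rightarrow> real \<Rightarrow> bool" where
  "hopf_jacobian A \<omega> \<longleftrightarrow> \<omega> > 0 \<and>
     is_eigenvalue (cmat A) (\<i> * of_real \<omega>) \<and> is_eigenvalue (cmat A) (- \<i> * of_real \<omega>) \<and>
     (\<forall>\<mu>. is_eigenvalue (cmat A) \<mu> \<and> Re \<mu> = 0 \<longrightarrow> \<mu> = \<i> * of_real \<omega> \<or> \<mu> = - \<i> * of_real \<omega>)"

definition transversal :: "(real \<Rightarrow> real^'n^'n) \<Rightarrow> real \<Rightarrow> real \<Rightarrow> bool" where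
  "transversal Afam e0 \<omega> \<longleftrightarrow>
     (\<exists>\<mu> :: real \<Rightarrow> complex. \<mu> e0 = \<i> * of_real \<omega> \<and> continuous (at e0) \<mu> \<and>
        (\<forall>\<^sub>F e in at e0. is_eigenvalue (cmat (Afam e)) (\<mu> e)) \<and>
        (\<exists>d. ((\<lambda>e. Re (\<mu> e)) has_real_derivative d) (at e0) \<and> d \<noteq> 0))"

definition G21 :: "(real^'n \<Rightarrow> real^'n) \<Rightarrow> real^'n \<Rightarrow> real \<Rightarrow> complex^'n \<Rightarrow> complex^'n \<Rightarrow> complex" where
  "G21 F x \<omega> q p =
     (let A = cmat (jac F x); B = Bform F x; C = Cform F x; qb = cvec_cnj q in
      cpair p (C q q qb
               + B qb (matrix_inv (mat (2 * \<i> * of_real \<omega>) - A) *v B q q)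
               - 2 *s B q (matrix_inv A *v B q qb)))"

definition lyap1 :: "(real^'n \<Rightarrow> real^'n) \<Rightarrow> real^'n \<Rightarrow> real \<Rightarrow> complex^'n \<Rightarrow> complex^'n \<Rightarrow> real" where
  "lyap1 F x \<omega> q p = Re (G21 F x \<omega> q p) / (2 * \<omega>)"

definition adj_vec :: "real^'n^'n \<Rightarrow> real \<Rightarrow> complex^'n \<Rightarrow> complex^'n \<Rightarrow> bool" where
  "adj_vec A \<omega> q p \<longleftrightarrow> transpose (cmat A) *v p = (- \<i> * of_real \<omega>) *s p \<and> cpair p q = 1"

end

theory Submission
  imports Defs
begin


lemma axis3_comp:
  fixes X :: "real^3"
  shows "(X + t *\<^sub>R axis j 1) $ k = X $ k + (if k = j then t else 0)"
  by (simp add: axis_def)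

lemma pd1_3:
  fixes h h1 h2 h3 :: "real \<Rightarrow> real \<Rightarrow> real \<Rightarrow> real"
  assumes d1: "\<And>x y z. ((\<lambda>t. h t y z) has_real_derivative h1 x y z) (at x)"
    and d2: "\<And>x y z. ((\<lambda>t. h x t z) has_real_derivative h2 x y z) (at y)"
    and d3: "\<And>x y z. ((\<lambda>t. h x y t) has_real_derivative h3 x y z) (at z)"
  shows "pd1 (\<lambda>X::real^3. h (X$1) (X$2) (X$3)) = (\<lambda>X j. if j = 1 then h1 (X$1) (X$2) (X$3)
      else if j = 2 then h2 (X$1) (X$2) (X$3) else h3 (X$1) (X$2) (X$3))"
proof (intro ext)
  fix X :: "real^3" and j :: 3
  have sh: "((\<lambda>t. g (c + t)) has_real_derivative D) (at 0)"
    if "(g has_real_derivative D) (at c)" for g :: "real \<Rightarrow> real" and c D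
  proof -
    have "((g \<circ> (\<lambda>t. c + t)) has_real_derivative D * 1) (at 0)"
      by (rule DERIV_chain) (use that in \<open>auto intro!: derivative_eq_intros\<close>)
    then show ?thesis by (simp add: o_def)
  qed
  consider "j = 1" | "j = 2" | "j = 3" using exhaust_3 by blast
  then show "pd1 (\<lambda>X::real^3. h (X$1) (X$2) (X$3)) X j = (if j = 1 then h1 (X$1) (X$2) (X$3)
      else if j = 2 then h2 (X$1) (X$2) (X$3) else h3 (X$1) (X$2) (X$3))"
  proof cases
    case 1
    have "((\<lambda>t. h (X$1 + t) (X$2) (X$3)) has_real_derivative h1 (X$1) (X$2) (X$3)) (at 0)"
      by (rule sh[OF d1])
    then show ?thesis using 1 unfolding pd1_def axis3_comp by (simp add: DERIV_imp_deriv)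
  next
    case 2
    have "((\<lambda>t. h (X$1) (X$2 + t) (X$3)) has_real_derivative h2 (X$1) (X$2) (X$3)) (at 0)"
      by (rule sh[OF d2])
    then show ?thesis using 2 unfolding pd1_def axis3_comp by (simp add: DERIV_imp_deriv)
  next
    case 3
    have "((\<lambda>t. h (X$1) (X$2) (X$3 + t)) has_real_derivative h3 (X$1) (X$2) (X$3)) (at 0)"
      by (rule sh[OF d3])
    then show ?thesis using 3 unfolding pd1_def axis3_comp by (simp add: DERIV_imp_deriv)
  qed
qed

definition "f2 k e x y c = (c^2 + k)  *  sin x  *  cos x - sin x - e  *  y"
definition "f2a k x y c = (c^2 + k)  *  (cos x ^2 - sin x ^2) - cos x"
definition "f2c x y c = 2  *  c  *  sin x  *  cos x"
definition "f2aa k x y c = -4  *  (c^2 + k)  *  sin x  *  cos x + sin x"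
definition "f2ac x y c = 2  *  c  *  (cos x^2 - sin x^2)"
definition "f2cc x y c = 2  *  sin x  *  cos x"
definition "f2aaa k x y c = -4 * (c^2+k) * (cos x^2 - sin x^2) + cos x"
definition "f2aac x y c = -8 * c * sin x * cos x"
definition "f2acc x y c = 2 * (cos x^2 - sin x^2)"
definition "f3 al be x y c = al * (cos x - be)"
definition "f3a al x y c = -al * sin x"
definition "f3aa al x y c = -al * cos x"
definition "f3aaa al x y c = al * sin x"

lemma pd1_const: "pd1 (\<lambda>X::real^3. c) = (\<lambda>X j. 0)"
  using pd1_3[of "\<lambda>x y z. c" "\<lambda>x y z. 0" "\<lambda>x y z. 0" "\<lambda>x y z. 0"] by (auto intro!: ext)

lemma pd1_y: "pd1 (\<lambda>X::real^3. X$2) = (\<lambda>X j. if j = 2 then 1 else 0)"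
  using pd1_3[of "\<lambda>x y z. y" "\<lambda>x y z. 0" "\<lambda>x y z. 1" "\<lambda>x y z. 0"] by (auto intro!: ext)


lemma pd1_f2: "pd1 (\<lambda>X::real^3. f2 k e (X$1) (X$2) (X$3)) = (\<lambda>X j. if j = 1 then f2a k (X$1) (X$2) (X$3)
      else if j = 2 then - e else f2c (X$1) (X$2) (X$3))"
  by (rule pd1_3[of _ _ "\<lambda>x y z. - e", simplified]; unfold f2_def f2a_def f2c_def;
      (rule derivative_eq_intros refl | simp add: algebra_simps power2_eq_square)+)


lemma pd1_f2a: "pd1 (\<lambda>X::real^3. f2a k (X$1) (X$2) (X$3)) = (\<lambda>X j. if j = 1 then f2aa k (X$1) (X$2) (X$3)
      else if j = 2 then 0 else f2ac (X$1) (X$2) (X$3))"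
  by (rule pd1_3[of _ _ "\<lambda>x y z. 0" _, simplified]; unfold f2a_def f2aa_def f2ac_def;
      (rule derivative_eq_intros refl | simp add: algebra_simps power2_eq_square)+)

lemma pd1_f2c: "pd1 (\<lambda>X::real^3. f2c (X$1) (X$2) (X$3)) = (\<lambda>X j. if j = 1 then f2ac (X$1) (X$2) (X$3)
      else if j = 2 then 0 else f2cc (X$1) (X$2) (X$3))"
  by (rule pd1_3[of _ _ "\<lambda>x y z. 0" _, simplified]; unfold f2c_def f2ac_def f2cc_def;
      (rule derivative_eq_intros refl | simp add: algebra_simps power2_eq_square)+)

lemma pd1_f2aa: "pd1 (\<lambda>X::real^3. f2aa k (X$1) (X$2) (X$3)) = (\<lambda>X j. if j = 1 then f2aaa k (X$1) (X$2) (X$3)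
      else if j = 2 then 0 else f2aac (X$1) (X$2) (X$3))"
  by (rule pd1_3[of _ _ "\<lambda>x y z. 0" _, simplified]; unfold f2aa_def f2aaa_def f2aac_def;
      (rule derivative_eq_intros refl | simp add: algebra_simps power2_eq_square)+)

lemma pd1_f2ac: "pd1 (\<lambda>X::real^3. f2ac (X$1) (X$2) (X$3)) = (\<lambda>X j. if j = 1 then f2aac (X$1) (X$2) (X$3)
      else if j = 2 then 0 else f2acc (X$1) (X$2) (X$3))"
  by (rule pd1_3[of _ _ "\<lambda>x y z. 0" _, simplified]; unfold f2ac_def f2aac_def f2acc_def;
      (rule derivative_eq_intros refl | simp add: algebra_simps power2_eq_square)+)

lemma pd1_f2cc: "pd1 (\<lambda>X::real^3. f2cc (X$1) (X$2) (X$3)) = (\<lambda>X j. if j = 1 then f2acc (X$1) (X$2) (X$3)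
      else if j = 2 then 0 else 0)"
  by (rule pd1_3[of _ _ "\<lambda>x y z. 0" "\<lambda>x y z. 0", simplified]; unfold f2cc_def f2acc_def;
      (rule derivative_eq_intros refl | simp add: algebra_simps power2_eq_square)+)

lemma pd1_f3: "pd1 (\<lambda>X::real^3. f3 al be (X$1) (X$2) (X$3)) = (\<lambda>X j. if j = 1 then f3a al (X$1) (X$2) (X$3)
      else if j = 2 then 0 else 0)"
  by (rule pd1_3[of _ _ "\<lambda>x y z. 0" "\<lambda>x y z. 0", simplified]; unfold f3_def f3a_def;
      (rule derivative_eq_intros refl | simp add: algebra_simps power2_eq_square)+)

lemma pd1_f3a: "pd1 (\<lambda>X::real^3. f3a al (X$1) (X$2) (X$3)) = (\<lambda>X j. if j = 1 then f3aa al (X$1) (X$2) (X$3)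
      else if j = 2 then 0 else 0)"
  by (rule pd1_3[of _ _ "\<lambda>x y z. 0" "\<lambda>x y z. 0", simplified]; unfold f3a_def f3aa_def;
      (rule derivative_eq_intros refl | simp add: algebra_simps power2_eq_square)+)

lemma pd1_f3aa: "pd1 (\<lambda>X::real^3. f3aa al (X$1) (X$2) (X$3)) = (\<lambda>X j. if j = 1 then f3aaa al (X$1) (X$2) (X$3)
      else if j = 2 then 0 else 0)"
  by (rule pd1_3[of _ _ "\<lambda>x y z. 0" "\<lambda>x y z. 0", simplified]; unfold f3aa_def f3aaa_def;
      (rule derivative_eq_intros refl | simp add: algebra_simps power2_eq_square)+)

lemmas pd1_rules = pd1_const pd1_y pd1_f2 pd1_f2a pd1_f2c pd1_f2aa pd1_f2ac pd1_f2cc pd1_f3 pd1_f3a pd1_f3aa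

lemma sys_comps:
  "(\<lambda>X. sys 0 k al be e X $ 1) = (\<lambda>X. X$2)"
  "(\<lambda>X. sys 0 k al be e X $ 2) = (\<lambda>X. f2 k e (X$1) (X$2) (X$3))"
  "(\<lambda>X. sys 0 k al be e X $ 3) = (\<lambda>X. f3 al be (X$1) (X$2) (X$3))"
  by (auto simp: sys_def f2_def f3_def intro!: ext)

lemma jac_sys: "jac (sys 0 k al be e) X = vector [vector [0, 1, 0],
   vector [f2a k (X$1) (X$2) (X$3), -e, f2c (X$1) (X$2) (X$3)],
   vector [f3a al (X$1) (X$2) (X$3), 0, 0]]"
  unfolding jac_def by (simp add: vec_eq_iff forall_3 sys_comps pd1_rules)

lemma Bform_sys: "Bform (sys 0 k al be e) X u v = vector [0,
   of_real (f2aa k (X$1) (X$2) (X$3)) * u$1 * v$1 + of_real (f2ac (X$1) (X$2) (X$3)) * (u$1 * v$3 + u$3 * v$1)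
     + of_real (f2cc (X$1) (X$2) (X$3)) * u$3 * v$3,
   of_real (f3aa al (X$1) (X$2) (X$3)) * u$1 * v$1]"
  unfolding Bform_def pd2_def by (simp add: vec_eq_iff forall_3 sum_3 sys_comps pd1_rules algebra_simps)

lemma Cform_sys: "Cform (sys 0 k al be e) X u v w = vector [0,
   of_real (f2aaa k (X$1) (X$2) (X$3)) * u$1 * v$1 * w$1
   + of_real (f2aac (X$1) (X$2) (X$3)) * (u$1 * v$1 * w$3 + u$1 * v$3 * w$1 + u$3 * v$1 * w$1)
   + of_real (f2acc (X$1) (X$2) (X$3)) * (u$1 * v$3 * w$3 + u$3 * v$1 * w$3 + u$3 * v$3 * w$1),
   of_real (f3aaa al (X$1) (X$2) (X$3)) * u$1 * v$1 * w$1]"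
  unfolding Cform_def pd3_def pd2_def by (simp add: vec_eq_iff forall_3 sum_3 sys_comps pd1_rules algebra_simps)




definition Jm :: "real \<Rightarrow> real \<Rightarrow> real \<Rightarrow> real \<Rightarrow> real^3^3" where
  "Jm W e Q S = vector [vector [0, 1, 0], vector [-W, -e, Q], vector [-S, 0, 0]]"

lemma cmat_Jm_mult: "cmat (Jm W e Q S) *v v =
   vector [v$2, - of_real W * v$1 - of_real e * v$2 + of_real Q * v$3, - of_real S * v$1]"
  by (simp add: vec_eq_iff forall_3 matrix_vector_mult_def sum_3 cmat_def Jm_def)

lemma cmat_Jm_tmult: "transpose (cmat (Jm W e Q S)) *v v =
   vector [- of_real W * v$2 - of_real S * v$3, v$1 - of_real e * v$2, of_real Q * v$2]"
  by (simp add: vec_eq_iff forall_3 matrix_vector_mult_def sum_3 cmat_def Jm_def transpose_def)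

lemma vec3_eq: "(x::'a^3) = y \<longleftrightarrow> x$1 = y$1 \<and> x$2 = y$2 \<and> x$3 = y$3"
  by (simp add: vec_eq_iff forall_3)

lemma eig_Jm:
  assumes "Q \<noteq> 0" "S \<noteq> 0"
  shows "is_eigenvalue (cmat (Jm W e Q S)) \<mu> \<longleftrightarrow>
    \<mu>^3 + of_real e * \<mu>^2 + of_real W * \<mu> + of_real (Q*S) = 0"
proof
  assume "is_eigenvalue (cmat (Jm W e Q S)) \<mu>"
  then obtain v where v0: "v \<noteq> 0" and ev: "cmat (Jm W e Q S) *v v = \<mu> *s v"
    unfolding is_eigenvalue_def by blast
  from ev have e1: "v$2 = \<mu> * v$1" and e2: "- of_real W * v$1 - of_real e * (\<mu> * v$1) + of_real Q * v$3 = \<mu> * (\<mu> * v$1)"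
    and e3: "- of_real S * v$1 = \<mu> * v$3"
    unfolding cmat_Jm_mult vec3_eq by auto
  have v1: "v$1 \<noteq> 0"
  proof
    assume h: "v$1 = 0"
    then have "v$2 = 0" using e1 by simp
    then have "of_real Q * v$3 = 0" using e2 h by simp
    then have "v$3 = 0" using assms by simp
    then have "v = 0" using h \<open>v$2 = 0\<close> by (simp add: vec3_eq)
    then show False using v0 by simp
  qed
  have "(\<mu>^3 + of_real e * \<mu>^2 + of_real W * \<mu> + of_real (Q*S)) * v$1 = 0"
  proof -
    have "\<mu> * (- of_real W * v$1 - of_real e * (\<mu> * v$1) + of_real Q * v$3) = \<mu> * (\<mu> * (\<mu> * v$1))" using e2 by simp
    then have "- of_real W * \<mu> * v$1 - of_real e * \<mu> * (\<mu> * v$1) + of_real Q * (\<mu> * v$3) = \<mu> * (\<mu> * (\<mu> * v$1))"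
      by (simp add: algebra_simps)
    then have "- of_real W * \<mu> * v$1 - of_real e * \<mu> * (\<mu> * v$1) + of_real Q * (- of_real S * v$1) = \<mu> * (\<mu> * (\<mu> * v$1))"
      using e3 by simp
    then show ?thesis unfolding power2_eq_square power3_eq_cube of_real_mult by algebra
  qed
  then show "\<mu>^3 + of_real e * \<mu>^2 + of_real W * \<mu> + of_real (Q*S) = 0" using v1 by simp
next
  assume p: "\<mu>^3 + of_real e * \<mu>^2 + of_real W * \<mu> + of_real (Q*S) = 0"
  have m0: "\<mu> \<noteq> 0"
  proof
    assume "\<mu> = 0" then have "of_real (Q*S) = (0::complex)" using p by simp
    then show False using assms by simp
  qed
  define v :: "complex^3" where "v = vector [1, \<mu>, - of_real S / \<mu>]"
  have "v \<noteq> 0" unfolding v_def by (simp add: vec3_eq)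
  moreover have "cmat (Jm W e Q S) *v v = \<mu> *s v"
  proof -
    have "- of_real W - of_real e * \<mu> + of_real Q * (- of_real S / \<mu>) = \<mu> * \<mu>"
    proof -
      have "(- of_real W - of_real e * \<mu> + of_real Q * (- of_real S / \<mu>)) * \<mu> =
          - of_real W * \<mu> - of_real e * \<mu> * \<mu> - of_real Q * of_real S"
        using m0 by (simp add: field_simps)
      also have "\<dots> = \<mu> * \<mu> * \<mu>"
        using p unfolding power2_eq_square power3_eq_cube of_real_mult by algebra
      finally have "(- of_real W - of_real e * \<mu> + of_real Q * (- of_real S / \<mu>)) * \<mu> = \<mu> * \<mu> * \<mu>" .
      then show ?thesis using m0 by (metis mult_right_cancel)
    qed
    then show ?thesis unfolding cmat_Jm_mult v_def using m0 by (simp add: vec3_eq)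
  qed
  ultimately show "is_eigenvalue (cmat (Jm W e Q S)) \<mu>" unfolding is_eigenvalue_def by blast
qed

lemma invertible_ker:
  fixes M :: "'a::field^'n^'n"
  assumes "\<And>x. M *v x = 0 \<Longrightarrow> x = 0"
  shows "invertible M"
  using assms matrix_left_invertible_ker invertible_left_inverse by blast

lemma minv_apply:
  fixes M :: "'a::field^'n^'n"
  assumes "invertible M" "M *v h = y"
  shows "matrix_inv M *v y = h"
proof -
  have "matrix_inv M ** M = mat 1"
    using assms(1) unfolding invertible_def matrix_inv_def by (rule someI2_ex) auto
  then show ?thesis using assms(2)
    by (metis matrix_vector_mul_assoc matrix_vector_mul_lid)
qed

lemma mat_minus_mult: "(mat c - M) *v x = c *s x - M *v (x::'a::comm_ring_1^3)"
  by (simp add: matrix_vector_mult_diff_rdistrib vec_eq_iff forall_3 matrix_vector_mult_def sum_3 mat_def left_diff_distrib)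

lemma eig_ker:
  fixes M :: "complex^3^3"
  assumes "\<not> is_eigenvalue M c"
  shows "invertible (mat c - M)"
proof (rule invertible_ker)
  fix x assume "(mat c - M) *v x = 0"
  then have "M *v x = c *s x" unfolding mat_minus_mult by simp
  then show "x = 0" using assms unfolding is_eigenvalue_def by blast
qed

lemma eig_ker0:
  fixes M :: "complex^3^3"
  assumes "\<not> is_eigenvalue M 0"
  shows "invertible M"
proof (rule invertible_ker)
  fix x assume "M *v x = 0"
  then have "M *v x = 0 *s x" by simp
  then show "x = 0" using assms unfolding is_eigenvalue_def by blast
qed




lemma AlgMain:
  fixes r w z a b s e :: real and p :: "complex^3"
  assumes pos: "r>0" "z>0" "a>0" "w > 0"
  assumes hb: "b = r^2" and hs: "s = w * r" and he: "e = 2 * a * b^2 * z"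
  defines "W \<equiv> w^2" and "Q \<equiv> 2 * z * b* s" and "S \<equiv> a* s"
  defines "q \<equiv> vector [-\<i>, of_real w, of_real (a * r)] :: complex^3"
  defines "qb \<equiv> vector [\<i>, of_real w, of_real (a * r)] :: complex^3"
  defines "Bf \<equiv> (\<lambda>u v::complex^3. vector [0,
      of_real (-3* s) * u$1 * v$1 + of_real (2 * z * (2 * b^2-1)) * (u$1 * v$3 + u$3 * v$1) + of_real (2 * b* s) * u$3 * v$3,
      of_real (-a * b) * u$1 * v$1] :: complex^3)"
  defines "Cf \<equiv> (\<lambda>u v x::complex^3. vector [0,
      of_real (4/b - 7 * b) * u$1 * v$1 * x$1
      + of_real (-8 * z* s * b) * (u$1 * v$1 * x$3 + u$1 * v$3 * x$1 + u$3 * v$1 * x$1)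
      + of_real (2 * (2 * b^2-1)) * (u$1 * v$3 * x$3 + u$3 * v$1 * x$3 + u$3 * v$3 * x$1),
      of_real (a* s) * u$1 * v$1 * x$1] :: complex^3)"
  defines "k2 \<equiv> 2 * b^2 - 1"
  defines "XC \<equiv> Complex (-10 * a * z * b* s * r) (-(4/b - 7 * b) - 2 * a^2 * b * k2)"
  defines "X11 \<equiv> Complex (2 * a * z * r * b * k2/s + 2 * a * r* s * (a^2 * b^2-1)/z + 2 * a * z * r * b^3/s) (3 * b-2 * k2 * (a^2 * b^2-1)/b)"
  defines "cst \<equiv> Complex (a * b * r * z * k2/s) (-(a^2 * b^3))"
  defines "N1 \<equiv> Complex (s * (3+2 * a^2 * b^2)) (-(a * r * z * (9 * b^2-4)))"
  defines "M \<equiv> Complex (-a * r * z) (s * (a^2 * b^2-3))"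
  defines "D1 \<equiv> Complex (-3 * w^2) (3/2 * w * e)"
  assumes adj: "transpose (cmat (Jm W e Q S)) *v p = (-\<i> * of_real w) *s p" "cpair p q = 1"
  shows "cpair p (Cf q q qb + Bf qb (matrix_inv (mat (2 * \<i> * of_real w) - cmat (Jm W e Q S)) *v Bf q q)
            - 2 *s Bf q (matrix_inv (cmat (Jm W e Q S)) *v Bf q qb))
         = ((XC - 2 * X11 + cst) * D1 + N1 * M) / (2 * Complex w (-e) * D1)"
proof -
  have bp: "b > 0" and sp: "s > 0" and ep: "e > 0" using pos unfolding hb hs he by auto
  have QS: "Q * S = e * W" unfolding Q_def S_def he W_def hs hb by algebra
  have nQ: "Q \<noteq> 0" "S \<noteq> 0" using pos bp sp unfolding Q_def S_def by auto
  let ?M0 = "cmat (Jm W e Q S)"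
  have inv0: "invertible ?M0"
    by (rule eig_ker0) (use nQ in \<open>simp add: eig_Jm\<close>)
  have inv2: "invertible (mat (2 * \<i> * of_real w) - ?M0)"
  proof (rule eig_ker)
    show "\<not> is_eigenvalue ?M0 (2 * \<i> * of_real w)"
    proof
      assume "is_eigenvalue ?M0 (2 * \<i> * of_real w)"
      then have "(2 * \<i> * of_real w)^3 + of_real e * (2 * \<i> * of_real w)^2 + of_real W * (2 * \<i> * of_real w) + of_real (Q * S) = 0"
        using eig_Jm[OF nQ] by blast
      then have "Re ((2 * \<i> * of_real w)^3 + of_real e * (2 * \<i> * of_real w)^2 + of_real W * (2 * \<i> * of_real w) + of_real (Q * S)) = 0"
        by simp
      then have "-4 * e * w^2 + e * W = 0" unfolding QS by (simp add: power3_eq_cube power2_eq_square)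
      then show False using ep pos unfolding W_def by (simp add: power2_eq_square)
    qed
  qed
  define h11 :: "complex^3" where "h11 = vector [of_real (b/s), 0, of_real ((a^2 * b^2-1)/(z * b))]"
  have h11: "matrix_inv ?M0 *v Bf q qb = h11"
  proof (rule minv_apply[OF inv0])
    show "?M0 *v h11 = Bf q qb"
      unfolding cmat_Jm_mult h11_def Bf_def q_def qb_def vec3_eq
      using pos bp sp
      apply (simp add: W_def Q_def S_def)
      apply (simp add: field_simps hs hb)
      apply algebra
      done
  qed
  have D1nz: "D1 \<noteq> 0" using pos unfolding D1_def by (simp add: Complex_eq_0)
  define h1 where "h1 = N1 / D1"
  have h1D: "D1 * h1 = N1" unfolding h1_def using D1nz by simp
  define h20 :: "complex^3" where "h20 = vector [h1, 2 * \<i> * of_real w * h1, (of_real (a * b) - of_real (a * s) * h1) / (2 * \<i> * of_real w)]"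
  have h20: "matrix_inv (mat (2 * \<i> * of_real w) - ?M0) *v Bf q q = h20"
  proof (rule minv_apply[OF inv2])
    have "D1 = of_real (-3 * w^2) + \<i> * of_real (3/2 * w * e)" "N1 = of_real (s * (3 + 2 * a^2 * b^2)) + \<i> * of_real (-(a * r * z * (9 * b^2 - 4)))"
      unfolding D1_def N1_def Complex_eq by simp_all
    with h1D have hh: "(of_real (-3 * w^2) + \<i> * of_real (3/2 * w * e)) * h1 = of_real (s * (3 + 2 * a^2 * b^2)) + \<i> * of_real (-(a * r * z * (9 * b^2 - 4)))"
      by simp
    then have hh': "(- 3 * (of_real w)^2 + \<i> * (3/2 * of_real w * (2 * of_real a * (of_real r)^4 * of_real z))) * h1 = of_real w * of_real r * (3 + 2 * (of_real a)^2 * (of_real r)^4) - \<i> * (of_real a * of_real r * of_real z * (9 * (of_real r)^4 - 4))"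
      unfolding he hs hb by simp
    show "(mat (2 * \<i> * of_real w) - ?M0) *v h20 = Bf q q"
      unfolding mat_minus_mult cmat_Jm_mult h20_def Bf_def q_def vec3_eq W_def S_def Q_def he hs hb
      using pos apply (simp add: field_simps)
      using hh' i_squared
      apply algebra
      done
  qed
  have hh': "(- 3 * (of_real w)^2 + \<i> * (3/2 * of_real w * (2 * of_real a * (of_real r)^4 * of_real z))) * h1 = of_real w * of_real r * (3 + 2 * (of_real a)^2 * (of_real r)^4) - \<i> * (of_real a * of_real r * of_real z * (9 * (of_real r)^4 - 4))"
  proof -
    have "D1 = of_real (-3 * w^2) + \<i> * of_real (3/2 * w * e)" "N1 = of_real (s * (3 + 2 * a^2 * b^2)) + \<i> * of_real (-(a * r * z * (9 * b^2 - 4)))"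
      unfolding D1_def N1_def Complex_eq by simp_all
    with h1D show ?thesis unfolding he hs hb by simp
  qed
  define V where "V = Cf q q qb + Bf qb h20 - 2 *s Bf q h11"
  from adj(1) have r1: "- of_real W * p$2 - of_real S * p$3 = (-\<i> * of_real w) * p$1"
    and r2: "p$1 - of_real e * p$2 = (-\<i> * of_real w) * p$2"
    and r3: "of_real Q * p$2 = (-\<i> * of_real w) * p$3"
    unfolding cmat_Jm_tmult vec3_eq by simp_all
  have wnz: "complex_of_real w \<noteq> 0" using pos by simp
  have p1: "p$1 = (of_real e - \<i> * of_real w) * p$2" using r2 by (simp add: algebra_simps)
  have p3: "p$3 = \<i> * of_real (Q/w) * p$2"
  proof -
    have "of_real w * p$3 = \<i> * of_real Q * p$2" using r3 i_squared by algebra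
    then show ?thesis using wnz by (simp add: field_simps)
  qed
  have Qar: "Q * (a * r) / w = e" using pos unfolding Q_def he hs hb by (simp add: field_simps power2_eq_square)
  have cp: "cnj (p$2) * (2 * (of_real w - \<i> * of_real e)) = 1"
  proof -
    have "cpair p q = cnj (p$1) * (-\<i>) + cnj (p$2) * of_real w + cnj (p$3) * of_real (a * r)"
      unfolding cpair_def q_def by (simp add: sum_3)
    also have "\<dots> = cnj (p$2) * (2 * (of_real w - \<i> * of_real (Q * (a * r) / w)) + \<i> * of_real (Q * (a * r) / w) - \<i> * of_real e)"
      unfolding p1 p3 by (simp add: algebra_simps)
    finally show ?thesis using adj(2) unfolding Qar by simp
  qed
  have cV: "cpair p V = cnj (p$2) * (V$2 - \<i> * of_real (Q/w) * V$3)"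
  proof -
    have "V$1 = 0" unfolding V_def Cf_def Bf_def by simp
    then show ?thesis unfolding cpair_def by (simp add: sum_3 p1 p3 algebra_simps)
  qed
  have key: "(V$2 - \<i> * of_real (Q/w) * V$3) * D1 = (XC - 2 * X11 + cst) * D1 + N1 * M"
    unfolding V_def Cf_def Bf_def q_def qb_def h20_def h11_def XC_def X11_def cst_def N1_def M_def D1_def Complex_eq
      k2_def Q_def he hs hb
    using pos apply (simp add: field_simps)
    using hh' i_squared apply algebra
    done
  have "cpair p V = ((XC - 2 * X11 + cst) * D1 + N1 * M) / (2 * Complex w (- e) * D1)"
  proof -
    have c2: "2 * Complex w (- e) = 2 * (of_real w - \<i> * of_real e)" by (simp add: Complex_eq)
    have Anz: "2 * (of_real w - \<i> * of_real e) \<noteq> (0::complex)"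
    proof
      assume "2 * (of_real w - \<i> * of_real e) = (0::complex)"
      then have "Re (2 * (of_real w - \<i> * of_real e)) = 0" by simp
      then show False using pos by simp
    qed
    have c: "cnj (p$2) = inverse (2 * (of_real w - \<i> * of_real e))" using cp Anz
      by (simp add: field_simps)
    have X: "V$2 - \<i> * of_real (Q/w) * V$3 = ((XC - 2 * X11 + cst) * D1 + N1 * M) * inverse D1"
      using key D1nz by (simp add: field_simps)
    show ?thesis unfolding cV c2 c X by (simp add: divide_inverse mult_ac)
  qed
  then show ?thesis unfolding V_def h11 h20 .
qed

lemma adj_exists:
  fixes r w z a b s e :: real
  assumes pos: "r>0" "z>0" "a>0" "w > 0"
  assumes hb: "b = r^2" and hs: "s = w * r" and he: "e = 2 * a * b^2 * z"
  shows "\<exists>p. transpose (cmat (Jm (w^2) e (2 * z * b * s) (a * s))) *v p = (-\<i> * of_real w) *s p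
     \<and> cpair p (vector [-\<i>, of_real w, of_real (a * r)] :: complex^3) = 1"
proof -
  define Q where "Q = 2 * z * b * s"
  have Qar: "Q * (a * r) / w = e" using pos unfolding Q_def he hs hb by (simp add: field_simps power2_eq_square)
  have Qas: "a * s * (Q / w) = e * w" using pos unfolding Q_def he hs hb by (simp add: field_simps power2_eq_square)
  have Anz: "of_real w + \<i> * of_real e \<noteq> (0::complex)"
  proof
    assume "of_real w + \<i> * of_real e = (0::complex)"
    then have "Re (of_real w + \<i> * of_real e) = 0" by simp
    then show False using pos by simp
  qed
  define c where "c = 1 / (2 * (of_real w + \<i> * of_real e))"
  define p :: "complex^3" where "p = vector [(of_real e - \<i> * of_real w) * c, c, \<i> * of_real (Q / w) * c]"
  have cc: "cnj c * (2 * (of_real w - \<i> * of_real e)) = 1"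
    unfolding c_def using Anz pos by (simp add: field_simps)
  have Qc: "complex_of_real a * of_real s * of_real Q = of_real e * of_real w * of_real w"
    using Qas pos by (simp add: field_simps flip: of_real_mult)
  have "transpose (cmat (Jm (w^2) e Q (a * s))) *v p = (-\<i> * of_real w) *s p"
    unfolding cmat_Jm_tmult vec3_eq p_def using pos apply (simp add: field_simps power2_eq_square)
    using Qc i_squared by algebra
  moreover have "cpair p (vector [-\<i>, of_real w, of_real (a * r)] :: complex^3) = 1"
  proof -
    have "cpair p (vector [-\<i>, of_real w, of_real (a * r)] :: complex^3)
        = cnj c * (2 * (of_real w - \<i> * of_real (Q * (a * r) / w)) + \<i> * of_real (Q * (a * r) / w) - \<i> * of_real e)"
      unfolding cpair_def p_def by (simp add: sum_3 algebra_simps)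
    then show ?thesis unfolding Qar using cc by simp
  qed
  ultimately show ?thesis unfolding Q_def by blast
qed




lemma transv_Jm:
  fixes W E0 Q S :: real
  assumes W: "W > 0" and E0: "E0 > 0" and nQ: "Q \<noteq> 0" "S \<noteq> 0" and QS: "Q * S = E0 * W"
  shows "transversal (\<lambda>e. Jm W e Q S) E0 (sqrt W)"
proof -
  define K where "K = E0 * W"
  define f where "f = (\<lambda>l::real. - l - W / l - K / l^2)"
  define f' where "f' = (\<lambda>l::real. -1 + W / l^2 + 2 * K / l^3)"
  have fder: "(f has_real_derivative f' l) (at l)" if "l \<noteq> 0" for l
    unfolding f_def f'_def using that
    by (auto intro!: derivative_eq_intros simp: field_simps power2_eq_square power3_eq_cube)
  have fcont: "isCont f l" if "l \<noteq> 0" for l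
    using fder[OF that] by (rule DERIV_isCont)
  have f'neg: "f' l < 0" if "-2 * E0 \<le> l" "l < 0" for l
  proof -
    have "f' l = (-(l^3) + W * l + 2 * K) / l^3"
      unfolding f'_def using that by (simp add: field_simps power2_eq_square power3_eq_cube)
    moreover have "-(l^3) + W * l + 2 * K > 0"
    proof -
      have "-(l^3) > 0" using that by simp
      moreover have "W * l + 2 * K \<ge> 0" unfolding K_def using that W mult_nonneg_nonneg[of W "l + 2 * E0"]
        by (simp add: algebra_simps)
      ultimately show ?thesis by linarith
    qed
    moreover have "l^3 < 0" using that by simp
    ultimately show ?thesis by (simp add: divide_pos_neg)
  qed
  define a0 where "a0 = -3 * E0 / 2"
  define b0 where "b0 = - E0 / 2"
  define l0 where "l0 = - E0"
  have ab: "a0 < l0" "l0 < b0" "b0 < 0" "-2 * E0 \<le> a0" unfolding a0_def b0_def l0_def using E0 by auto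
  have dec: "f y < f x" if "a0 \<le> x" "x < y" "y \<le> b0" for x y
  proof -
    have "f x > f y"
    proof (rule DERIV_neg_imp_decreasing[OF that(2)])
      fix t assume "x \<le> t" "t \<le> y"
      then have "-2 * E0 \<le> t" "t < 0" using that ab by linarith+
      then show "\<exists>y. DERIV f t :> y \<and> y < 0" using fder[of t] f'neg[of t] by (intro exI[of _ "f' t"]) auto
    qed
    then show ?thesis by simp
  qed
  have fl0: "f l0 = E0" unfolding f_def l0_def K_def using E0 by (simp add: field_simps power2_eq_square)
  define A where "A = f b0"
  define B where "B = f a0"
  have AB: "A < E0" "E0 < B" unfolding A_def B_def using dec ab fl0 by (metis order.refl order_less_imp_le)+
  have contab: "continuous_on {a0..b0} f"
    using ab by (intro continuous_at_imp_continuous_on ballI fcont) auto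
  define g where "g = (\<lambda>y. SOME l. a0 \<le> l \<and> l \<le> b0 \<and> f l = y)"
  have gex: "a0 \<le> g y \<and> g y \<le> b0 \<and> f (g y) = y" if "A \<le> y" "y \<le> B" for y
  proof -
    have "\<exists>l. a0 \<le> l \<and> l \<le> b0 \<and> f l = y"
      using IVT2'[of f b0 y a0, OF _ _ _ contab] that ab unfolding A_def B_def by auto
    then show ?thesis unfolding g_def by (rule someI_ex)
  qed
  have frange: "A \<le> f l \<and> f l \<le> B" if "a0 \<le> l" "l \<le> b0" for l
    unfolding A_def B_def using dec that by (metis order.order_iff_strict order_less_imp_le)
  have ginv: "g (f l) = l" if "a0 \<le> l" "l \<le> b0" for l
  proof -
    let ?l = "g (f l)"
    have h: "a0 \<le> ?l" "?l \<le> b0" "f ?l = f l" using gex frange[OF that] by auto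
    show ?thesis
    proof (rule ccontr)
      assume "?l \<noteq> l"
      then consider "?l < l" | "l < ?l" by linarith
      then show False
        using dec[of ?l l] dec[of l ?l] h that by cases auto
    qed
  qed
  have gl0: "g E0 = l0" using ginv[of l0] ab fl0 by simp
  have gcont: "isCont g E0"
  proof -
    have "isCont g (f l0)"
    proof (rule isCont_inverse_function[where d = "E0/2" and f = f and g = g and x = l0])
      show "0 < E0/2" using E0 by simp
      fix z assume z: "\<bar>z - l0\<bar> \<le> E0/2"
      then have "a0 \<le> z \<and> z \<le> b0" using abs_le_D1[OF z] abs_le_D2[OF z]
        unfolding a0_def b0_def l0_def by linarith
      then show "g (f z) = z" using ginv by auto
    next
      fix z assume z: "\<bar>z - l0\<bar> \<le> E0/2"
      then have "a0 \<le> z \<and> z \<le> b0" using abs_le_D1[OF z] abs_le_D2[OF z]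
        unfolding a0_def b0_def l0_def by linarith
      then show "isCont f z" using fcont ab by auto
    qed
    then show ?thesis using fl0 by simp
  qed
  have f'l0: "f' l0 = -1 - W / E0^2"
    unfolding f'_def l0_def K_def using E0 by (simp add: field_simps power2_eq_square power3_eq_cube)
  have f'l0nz: "f' l0 \<noteq> 0" using f'l0 W E0 by (smt (verit) divide_pos_pos zero_less_power)
  have gder: "DERIV g E0 :> inverse (f' l0)"
  proof (rule DERIV_inverse_function[where a = A and b = B])
    show "DERIV f (g E0) :> f' l0" using gl0 fder ab by simp
    show "f' l0 \<noteq> 0" by (rule f'l0nz)
    show "A < E0" "E0 < B" by (rule AB)+
    show "\<And>y. A < y \<Longrightarrow> y < B \<Longrightarrow> f (g y) = y" using gex by auto
    show "isCont g E0" by (rule gcont)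
  qed
  define \<sigma> where "\<sigma> = (\<lambda>e. e + g e)"
  define \<tau> where "\<tau> = (\<lambda>e. W + g e * \<sigma> e)"
  define \<Delta> where "\<Delta> = (\<lambda>e. 4 * \<tau> e - (\<sigma> e)^2)"
  define \<mu> where "\<mu> = (\<lambda>e. complex_of_real (- \<sigma> e / 2) + \<i> * complex_of_real (sqrt (\<Delta> e) / 2))"
  have sig0: "\<sigma> E0 = 0" unfolding \<sigma>_def gl0 l0_def by simp
  have Del0: "\<Delta> E0 = 4 * W" unfolding \<Delta>_def \<tau>_def sig0 by simp
  have mu0: "\<mu> E0 = \<i> * of_real (sqrt W)"
  proof -
    have "sqrt (4 * W) = 2 * sqrt W" by (simp add: real_sqrt_mult)
    then show ?thesis unfolding \<mu>_def sig0 Del0 by simp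
  qed
  have sigc: "isCont \<sigma> E0" unfolding \<sigma>_def by (intro continuous_intros gcont)
  have Delc: "isCont \<Delta> E0" unfolding \<Delta>_def \<tau>_def by (intro continuous_intros gcont sigc)
  have muc: "continuous (at E0) \<mu>" unfolding \<mu>_def by (intro continuous_intros Delc sigc) simp_all
  have ev: "\<forall>\<^sub>F e in at E0. is_eigenvalue (cmat (Jm W e Q S)) (\<mu> e)"
  proof -
    have "\<forall>\<^sub>F e in at E0. 0 < \<Delta> e"
      using Delc Del0 W unfolding isCont_def by (auto dest!: order_tendstoD(1)[where a = 0])
    moreover have "\<forall>\<^sub>F e in at E0. A < e"
      using AB by (intro order_tendstoD(1)[OF tendsto_ident_at]) auto
    moreover have "\<forall>\<^sub>F e in at E0. e < B"
      using AB by (intro order_tendstoD(2)[OF tendsto_ident_at]) auto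
    ultimately show ?thesis
    proof eventually_elim
      case (elim e)
      define \<rho> where "\<rho> = g e"
      have r: "a0 \<le> \<rho>" "\<rho> \<le> b0" "f \<rho> = e" using gex[of e] elim unfolding \<rho>_def by auto
      then have rneg: "\<rho> < 0" using ab by linarith
      have root: "\<rho>^3 + e * \<rho>^2 + W * \<rho> + K = 0"
      proof -
        have "- \<rho> - W / \<rho> - K / \<rho>^2 = e" using r unfolding f_def by simp
        then have "\<rho>^2 * (- \<rho> - W / \<rho> - K / \<rho>^2) = \<rho>^2 * e" by simp
        moreover have "\<rho>^2 * (- \<rho> - W / \<rho> - K / \<rho>^2) = -(\<rho>^3) - W * \<rho> - K"
          using rneg by (simp add: field_simps power2_eq_square power3_eq_cube)
        ultimately show ?thesis by (simp add: algebra_simps)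
      qed
      have sq: "(sqrt (\<Delta> e))^2 = \<Delta> e" using elim by simp
      define sc where "sc = sqrt (\<Delta> e)"
      have sq': "(complex_of_real sc)^2 = of_real (4 * (W + \<rho> * (e + \<rho>)) - (e + \<rho>)^2)"
        using sq unfolding sc_def \<Delta>_def \<tau>_def \<sigma>_def \<rho>_def by (metis of_real_power)
      have rootc: "(of_real \<rho>)^3 + of_real e * (of_real \<rho>)^2 + of_real W * of_real \<rho> + (of_real K :: complex) = 0"
        using arg_cong[OF root, of complex_of_real] by simp
      have "(\<mu> e)^3 + of_real e * (\<mu> e)^2 + of_real W * \<mu> e + of_real (Q * S) = 0"
      proof -
        have m: "\<mu> e = - (of_real e + of_real \<rho>) / 2 + \<i> * of_real sc / 2"
          unfolding \<mu>_def \<sigma>_def \<rho>_def sc_def by simp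
        have QSK: "complex_of_real (Q * S) = of_real K" unfolding K_def QS ..
        have sq'': "(complex_of_real sc)^2 = 4 * of_real W + 4 * (of_real \<rho> * (of_real e + of_real \<rho>)) - (of_real e + of_real \<rho>)^2"
          using sq' by simp
        have m2: "\<mu> e = (- (of_real e + of_real \<rho>) + \<i> * of_real sc) * (1/2)"
          unfolding m by (simp add: field_simps)
        have half: "2 * (1/2::complex) = 1" by simp
        show ?thesis unfolding m2 QSK using sq'' rootc i_squared half by algebra
      qed
      then show ?case using eig_Jm[OF nQ] by blast
    qed
  qed
  have red: "((\<lambda>e. Re (\<mu> e)) has_real_derivative - (1 + inverse (f' l0)) / 2) (at E0)"
  proof -
    have "(\<lambda>e. Re (\<mu> e)) = (\<lambda>e. - (e + g e) / 2)" unfolding \<mu>_def \<sigma>_def by (simp add: fun_eq_iff)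
    moreover have "((\<lambda>e. - (e + g e) / 2) has_real_derivative - (1 + inverse (f' l0)) / 2) (at E0)"
      by (auto intro!: derivative_eq_intros gder)
    ultimately show ?thesis by simp
  qed
  have dnz: "- (1 + inverse (f' l0)) / 2 \<noteq> 0"
  proof
    assume "- (1 + inverse (f' l0)) / 2 = 0"
    then have "inverse (f' l0) = -1" by simp
    then have "f' l0 = -1" by (metis inverse_minus_eq inverse_1 inverse_inverse_eq)
    then show False using f'l0 W E0 by simp
  qed
  show ?thesis unfolding transversal_def
    using mu0 muc ev red dnz by blast
qed



lemma Core:
  fixes r w z a b s e :: real
  assumes pos: "r>0" "z>0" "a>0" "w > 0"
  assumes hb: "b = r^2" and hs: "s = w * r" and he: "e = 2 * a * b^2 * z"
  defines "k2 \<equiv> 2 * b^2 - 1"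
  defines "XC \<equiv> Complex (-10 * a * z * b * s * r) (-(4/b - 7 * b) - 2 * a^2 * b * k2)"
  defines "X11 \<equiv> Complex (2 * a * z * r * b * k2/s + 2 * a * r * s * (a^2 * b^2-1)/z + 2 * a * z * r * b^3/s) (3 * b-2 * k2 * (a^2 * b^2-1)/b)"
  defines "cst \<equiv> Complex (a * b * r * z * k2/s) (-(a^2 * b^3))"
  defines "N1 \<equiv> Complex (s * (3+2 * a^2 * b^2)) (-(a * r * z * (9 * b^2-4)))"
  defines "M \<equiv> Complex (-a * r * z) (s * (a^2 * b^2-3))"
  defines "D1 \<equiv> Complex (-3 * w^2) (3/2 * w * e)"
  defines "Pl \<equiv> s^4 * (2-5 * b * z^2-2 * a^2 * b^2)+s^2 * (2 * b^3 * z^2+3 * a^2 * b^3 * z^2-4 * a^2 * b^5 * z^2-a^4 * b^7 * z^2-5 * a^2 * b^6 * z^4)+(-2 * a^2 * b^4 * z^4+9 * a^2 * b^6 * z^4-7 * a^2 * b^8 * z^4)"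
  shows "Re (((XC - 2 * X11 + cst) * D1 + N1 * M) / (2 * Complex w (-e) * D1)) =
     4 * a * Pl / (b * z * (w^2+e^2) * (4 * w^2+e^2))"
proof -
  define Y where "Y = (XC - 2 * X11 + cst) * D1 + N1 * M"
  define Den where "Den = 2 * Complex w (-e) * D1"
  have ReD: "Re Den = 2 * (-3 * w^3 + 3/2 * w * e^2)" and ImD: "Im Den = 2 * (3 * w^2 * e + 3/2 * w^2 * e)"
    unfolding Den_def D1_def by (simp_all add: power2_eq_square power3_eq_cube algebra_simps)
  have nD: "(Re Den)^2 + (Im Den)^2 = 9 * w^2 * (w^2+e^2) * (4 * w^2+e^2)"
    unfolding ReD ImD by algebra
  have bnz: "b \<noteq> 0" "s \<noteq> 0" using pos unfolding hb hs by auto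
  have nz: "w^2+e^2 \<noteq> 0" "4 * w^2+e^2 \<noteq> 0" using pos 
    by (smt (verit) mult_pos_pos zero_less_power zero_le_power2)+
  have ReY: "Re Y = (-10 * a * z * b * s * r - 2 * (2 * a * z * r * b * k2/s + 2 * a * r * s * (a^2 * b^2-1)/z + 2 * a * z * r * b^3/s) + a * b * r * z * k2/s) * (-3 * w^2)
     - ((-(4/b - 7 * b) - 2 * a^2 * b * k2) - 2 * (3 * b-2 * k2 * (a^2 * b^2-1)/b) - a^2 * b^3) * (3/2 * w * e)
     + (s * (3+2 * a^2 * b^2)) * (-a * r * z) + (a * r * z * (9 * b^2-4)) * (s * (a^2 * b^2-3))"
    unfolding Y_def XC_def X11_def cst_def D1_def N1_def M_def by simp
  have ImY: "Im Y = (-10 * a * z * b * s * r - 2 * (2 * a * z * r * b * k2/s + 2 * a * r * s * (a^2 * b^2-1)/z + 2 * a * z * r * b^3/s) + a * b * r * z * k2/s) * (3/2 * w * e)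
     + ((-(4/b - 7 * b) - 2 * a^2 * b * k2) - 2 * (3 * b-2 * k2 * (a^2 * b^2-1)/b) - a^2 * b^3) * (-3 * w^2)
     + (s * (3+2 * a^2 * b^2)) * (s * (a^2 * b^2-3)) - (a * r * z * (9 * b^2-4)) * (-a * r * z)"
    unfolding Y_def XC_def X11_def cst_def D1_def N1_def M_def by simp
  have "Re (Y / Den) = (Re Y * Re Den + Im Y * Im Den) / (9 * w^2 * (w^2+e^2) * (4 * w^2+e^2))"
    by (simp add: Re_divide nD)
  also have "\<dots> = 4 * a * Pl / (b * z * (w^2+e^2) * (4 * w^2+e^2))"
  proof -
    have R1: "Re Y * (r^3 * w * z) = -12 * r^5 * w^4 * a + 30 * r^7 * w^4 * z^2 * a + 24 * r^9 * w^2 * z^2 * a + 12 * r^9 * w^4 * a^3"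
      unfolding ReY using pos unfolding he hs hb k2_def
      apply (simp add: field_simps)
      apply algebra
      done
    have I1: "Im Y * (r^3 * w * z) = -4 * r^5 * w * z^3 * a^2 + 12 * r^5 * w^3 * z + 6 * r^5 * w^3 * z * a^2 + 18 * r^9 * w * z^3 * a^2 - 30 * r^11 * w^3 * z^3 * a^2 - 30 * r^13 * w * z^3 * a^2 - 10 * r^13 * w^3 * z * a^4"
      unfolding ImY using pos unfolding he hs hb k2_def
      apply (simp add: field_simps)
      apply algebra
      done
    have F1: "(-12 * r^5 * w^4 * a + 30 * r^7 * w^4 * z^2 * a + 24 * r^9 * w^2 * z^2 * a + 12 * r^9 * w^4 * a^3) * Re Den + (-4 * r^5 * w * z^3 * a^2 + 12 * r^5 * w^3 * z + 6 * r^5 * w^3 * z * a^2 + 18 * r^9 * w * z^3 * a^2 - 30 * r^11 * w^3 * z^3 * a^2 - 30 * r^13 * w * z^3 * a^2 - 10 * r^13 * w^3 * z * a^4) * Im Den = 36 * a * w^3 * r * Pl"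
      unfolding ReD ImD Pl_def he hs hb by algebra
    have "(Re Y * Re Den + Im Y * Im Den) * (r^3 * w * z) = 36 * a * w^3 * r * Pl"
      unfolding F1[symmetric] R1[symmetric] I1[symmetric] by (simp add: algebra_simps)
    then have "(Re Y * Re Den + Im Y * Im Den) * (b * z) * (r * w) = (36 * a * w^2 * Pl) * (r * w)"
      unfolding hb by (simp add: algebra_simps power2_eq_square power3_eq_cube)
    then have "(Re Y * Re Den + Im Y * Im Den) * (b * z) = 36 * a * w^2 * Pl"
      using pos by simp
    moreover have "\<And>x A B P. x * (b * z) = 36 * a * w^2 * P \<Longrightarrow> A \<noteq> 0 \<Longrightarrow> B \<noteq> 0 \<Longrightarrow>
       x/(9 * w^2 * A * B) = 4 * a * P/(b * z * A * B)" using pos bnz by (auto simp: field_simps)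
    ultimately show ?thesis using nz by (metis mult.assoc)
  qed
  finally show ?thesis unfolding Y_def Den_def .
qed



lemma imag_poly:
  fixes y e W K :: real
  shows "(\<i> * of_real y)^3 + of_real e * (\<i> * of_real y)^2 + of_real W * (\<i> * of_real y) + of_real K
     = Complex (K - e * y^2) (W * y - y^3)"
  by (simp add: complex_eq_iff power2_eq_square power3_eq_cube)

theorem corollary3p4:
  fixes \<alpha> \<beta> \<kappa> :: real
  assumes "0 < \<beta>" "\<beta> < 1" "0 < \<alpha>" "0 \<le> \<kappa>" "\<kappa> < 1"
  defines "F \<equiv> (\<lambda>\<epsilon>. sys 0 \<kappa> \<alpha> \<beta> \<epsilon>)"
    and "P0 \<equiv> (vector [arccos \<beta>, 0, sqrt (1 / \<beta> - \<kappa>)] :: real^3)"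
    and "\<epsilon>c \<equiv> 2 * \<alpha> * \<beta> powr (3/2) * sqrt (1 - \<kappa> * \<beta>)"
    and "\<omega>0 \<equiv> sqrt ((1 - \<beta>^2) powr (3/2) / (\<beta> * sqrt (1 - \<beta>^2)))"
    and "q \<equiv> (vector [- \<i>,
              complex_of_real (sqrt ((1 - \<beta>^2) powr (3/2) / (\<beta> * sqrt (1 - \<beta>^2)))),
              complex_of_real (\<alpha> * sqrt \<beta> * sqrt ((1 - \<beta>^2) / \<beta>)
                 / sqrt ((1 - \<beta>^2) powr (3/2) / (\<beta> * sqrt (1 - \<beta>^2))))] :: complex^3)"
    and "G1 \<equiv> -3 + 5*\<kappa>*\<beta> - (\<alpha>^2 - 5)*\<beta>^2 + \<kappa>*(\<alpha>^2 - 7)*\<beta>^3 - 2*\<alpha>^2*\<kappa>^2*\<beta>^4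
              - (\<alpha>^4 - 2*\<alpha>^2*\<kappa>^2)*\<beta>^6 + \<alpha>^4*\<kappa>*\<beta>^7"
  shows "(\<forall>\<epsilon>. F \<epsilon> P0 = 0)
       \<and> (\<forall>\<epsilon>. (\<exists>\<omega>>0. is_eigenvalue (cmat (jac (F \<epsilon>) P0)) (\<i> * of_real \<omega>)) \<longleftrightarrow> \<epsilon> = \<epsilon>c)
       \<and> (\<exists>p. adj_vec (jac (F \<epsilon>c) P0) \<omega>0 q p)
       \<and> (\<forall>p. adj_vec (jac (F \<epsilon>c) P0) \<omega>0 q p \<longrightarrow> (lyap1 (F \<epsilon>c) P0 \<omega>0 q p = 0 \<longleftrightarrow> G1 = 0))
       \<and> (G1 \<noteq> 0 \<longrightarrow>
            hopf_jacobian (jac (F \<epsilon>c) P0) \<omega>0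
          \<and> transversal (\<lambda>\<epsilon>. jac (F \<epsilon>) P0) \<epsilon>c \<omega>0
          \<and> (\<forall>p. adj_vec (jac (F \<epsilon>c) P0) \<omega>0 q p \<longrightarrow> lyap1 (F \<epsilon>c) P0 \<omega>0 q p \<noteq> 0))"
proof -
  note bp = \<open>0 < \<beta>\<close> and b1 = \<open>\<beta> < 1\<close> and ap = \<open>0 < \<alpha>\<close> and k0 = \<open>0 \<le> \<kappa>\<close> and k1 = \<open>\<kappa> < 1\<close>
  define r where "r = sqrt \<beta>"
  define s where "s = sqrt (1 - \<beta>^2)"
  define z where "z = sqrt (1 / \<beta> - \<kappa>)"
  define w where "w = s / r"
  have rp: "r > 0" and r2: "r^2 = \<beta>" unfolding r_def using bp by auto
  have b2: "\<beta>^2 < 1" using bp b1 by (simp add: power_less_one_iff abs_less_iff)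
  have sp: "s > 0" and s2: "s^2 = 1 - \<beta>^2" unfolding s_def using b2 by auto
  have zarg: "1 / \<beta> - \<kappa> > 0"
  proof -
    have "1 / \<beta> > 1" using bp b1 by simp
    then show ?thesis using k1 by linarith
  qed
  have zp: "z > 0" and z2: "z^2 = 1 / \<beta> - \<kappa>" unfolding z_def using zarg by auto
  have wp: "w > 0" unfolding w_def using sp rp by simp
  have hb: "\<beta> = r^2" using r2 by simp
  have hs: "s = w * r" unfolding w_def using rp by simp
  have w2: "w^2 = s^2 / \<beta>" unfolding w_def using r2 by (simp add: power_divide)
  have zk: "z^2 + \<kappa> = 1 / \<beta>" using z2 by simp
  have om: "\<omega>0 = w"
  proof -
    have "(1 - \<beta>^2) powr (3/2) = s^3"
    proof -
      have "(1 - \<beta>^2) powr (3/2) = (1 - \<beta>^2) powr 1 * (1 - \<beta>^2) powr (1/2)"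
        using powr_add[of "1 - \<beta>^2" 1 "1/2"] by simp
      also have "\<dots> = (1 - \<beta>^2) * sqrt (1 - \<beta>^2)" using b2 by (simp add: powr_half_sqrt)
      also have "\<dots> = s^2 * s" by (simp only: s_def[symmetric] s2)
      finally show ?thesis by (simp add: power3_eq_cube power2_eq_square)
    qed
    then have "(1 - \<beta>^2) powr (3/2) / (\<beta> * sqrt (1 - \<beta>^2)) = w^2"
      unfolding w2 s_def[symmetric] using sp bp by (simp add: power3_eq_cube power2_eq_square)
    then show ?thesis unfolding \<omega>0_def using wp by simp
  qed
  have ecE: "\<epsilon>c = 2 * \<alpha> * \<beta>^2 * z"
  proof -
    have "\<beta> powr (3/2) = \<beta> * r" unfolding r_def using bp
      using powr_add[of \<beta> 1 "1/2"] by (simp add: powr_half_sqrt)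
    moreover have "sqrt (1 - \<kappa> * \<beta>) = r * z"
    proof -
      have "1 - \<kappa> * \<beta> = (r * z)^2" using z2 r2 bp by (simp add: power_mult_distrib field_simps)
      then show ?thesis using rp zp by simp
    qed
    ultimately show ?thesis unfolding \<epsilon>c_def using r2 by (simp add: power2_eq_square)
  qed
  have qE: "q = vector [- \<i>, of_real w, of_real (\<alpha> * r)]"
  proof -
    have "sqrt ((1 - \<beta>^2) / \<beta>) = w" unfolding w_def s_def r_def by (simp add: real_sqrt_divide)
    then show ?thesis unfolding q_def om[unfolded \<omega>0_def] r_def[symmetric] using wp by simp
  qed
  have cx: "cos (arccos \<beta>) = \<beta>" and sx: "sin (arccos \<beta>) = s"
    using bp b1 unfolding s_def by (simp_all add: sin_arccos)
  have P0c: "P0$1 = arccos \<beta>" "P0$2 = 0" "P0$3 = z" unfolding P0_def z_def by simp_all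
  have bs: "\<beta>^2 - s^2 = 2 * \<beta>^2 - 1" using s2 by simp
  have fv: "f2a \<kappa> (arccos \<beta>) 0 z = - (w^2)" "f2c (arccos \<beta>) 0 z = 2 * z * \<beta> * s"
    "f3a \<alpha> (arccos \<beta>) 0 z = - (\<alpha> * s)"
    unfolding f2a_def f2c_def f3a_def cx sx zk w2 using bp by (simp_all add: field_simps power2_eq_square)
  have fv2: "f2aa \<kappa> (arccos \<beta>) 0 z = -3 * s" "f2ac (arccos \<beta>) 0 z = 2 * z * (2 * \<beta>^2 - 1)"
    "f2cc (arccos \<beta>) 0 z = 2 * \<beta> * s" "f3aa \<alpha> (arccos \<beta>) 0 z = -\<alpha> * \<beta>"
    unfolding f2aa_def f2ac_def f2cc_def f3aa_def cx sx zk bs using bp by (simp_all add: field_simps power2_eq_square)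
  have fv3: "f2aaa \<kappa> (arccos \<beta>) 0 z = 4 / \<beta> - 7 * \<beta>" "f2aac (arccos \<beta>) 0 z = -8 * z * s * \<beta>"
    "f2acc (arccos \<beta>) 0 z = 2 * (2 * \<beta>^2 - 1)" "f3aaa \<alpha> (arccos \<beta>) 0 z = \<alpha> * s"
    unfolding f2aaa_def f2aac_def f2acc_def f3aaa_def cx sx zk bs using bp by (simp_all add: field_simps power2_eq_square)
  have jacE: "jac (F e) P0 = Jm (w^2) e (2 * z * \<beta> * s) (\<alpha> * s)" for e
    unfolding F_def jac_sys P0c fv Jm_def by simp
  have BF: "Bform (F \<epsilon>c) P0 = (\<lambda>u v::complex^3. vector [0,
      of_real (-3 * s) * u$1 * v$1 + of_real (2 * z * (2 * \<beta>^2-1)) * (u$1 * v$3 + u$3 * v$1) + of_real (2 * \<beta> * s) * u$3 * v$3,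
      of_real (-\<alpha> * \<beta>) * u$1 * v$1] :: complex^3)"
    unfolding F_def by (intro ext) (simp only: Bform_sys P0c fv2)
  have CF: "Cform (F \<epsilon>c) P0 = (\<lambda>u v x::complex^3. vector [0,
      of_real (4/\<beta> - 7 * \<beta>) * u$1 * v$1 * x$1
      + of_real (-8 * z * s * \<beta>) * (u$1 * v$1 * x$3 + u$1 * v$3 * x$1 + u$3 * v$1 * x$1)
      + of_real (2 * (2 * \<beta>^2-1)) * (u$1 * v$3 * x$3 + u$3 * v$1 * x$3 + u$3 * v$3 * x$1),
      of_real (\<alpha> * s) * u$1 * v$1 * x$1] :: complex^3)"
    unfolding F_def by (intro ext) (simp only: Cform_sys P0c fv3)
  have cq: "cvec_cnj (vector [- \<i>, of_real w, of_real (\<alpha> * r)] :: complex^3) = vector [\<i>, of_real w, of_real (\<alpha> * r)]"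
    unfolding cvec_cnj_def by (simp add: vec3_eq)
  have ecp: "\<epsilon>c > 0" unfolding ecE using ap bp zp by simp
  have nQ: "2 * z * \<beta> * s \<noteq> 0" "\<alpha> * s \<noteq> 0" using zp bp sp ap by auto
  have QS: "(2 * z * \<beta> * s) * (\<alpha> * s) = \<epsilon>c * w^2"
    unfolding ecE w2 using bp by (simp add: field_simps power2_eq_square)
  have Kp: "(2 * z * \<beta> * s) * (\<alpha> * s) > 0" using zp bp sp ap by simp
  have eigc: "is_eigenvalue (cmat (jac (F e) P0)) (\<i> * of_real y) \<longleftrightarrow>
      (2 * z * \<beta> * s) * (\<alpha> * s) = e * y^2 \<and> w^2 * y = y^3" for e y
    unfolding jacE eig_Jm[OF nQ] imag_poly Complex_eq_0 by auto
  have P1: "\<forall>\<epsilon>. F \<epsilon> P0 = 0"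
  proof
    fix \<epsilon>
    have "\<beta> * s * (z^2 + \<kappa>) - s = 0" unfolding zk using bp by simp
    then show "F \<epsilon> P0 = 0" unfolding F_def sys_def vec3_eq P0c cx sx by (simp add: algebra_simps)
  qed
  have P2: "\<forall>\<epsilon>. (\<exists>\<omega>>0. is_eigenvalue (cmat (jac (F \<epsilon>) P0)) (\<i> * of_real \<omega>)) \<longleftrightarrow> \<epsilon> = \<epsilon>c"
  proof (intro allI iffI)
    fix \<epsilon> assume "\<exists>\<omega>>0. is_eigenvalue (cmat (jac (F \<epsilon>) P0)) (\<i> * of_real \<omega>)"
    then obtain \<omega> where op: "\<omega> > 0" and h: "(2 * z * \<beta> * s) * (\<alpha> * s) = \<epsilon> * \<omega>^2" "w^2 * \<omega> = \<omega>^3"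
      unfolding eigc by blast
    have "\<omega>^2 = w^2" using h(2) op by (simp add: power2_eq_square power3_eq_cube)
    then have "\<epsilon>c * w^2 = \<epsilon> * w^2" using h(1) QS by simp
    then show "\<epsilon> = \<epsilon>c" using wp by simp
  next
    fix \<epsilon> assume "\<epsilon> = \<epsilon>c"
    then have "is_eigenvalue (cmat (jac (F \<epsilon>) P0)) (\<i> * of_real w)"
      unfolding eigc using QS by (simp add: power2_eq_square power3_eq_cube)
    then show "\<exists>\<omega>>0. is_eigenvalue (cmat (jac (F \<epsilon>) P0)) (\<i> * of_real \<omega>)" using wp by blast
  qed
  have adjE: "adj_vec (jac (F \<epsilon>c) P0) \<omega>0 q p \<longleftrightarrow>
     transpose (cmat (Jm (w^2) \<epsilon>c (2 * z * \<beta> * s) (\<alpha> * s))) *v p = (-\<i> * of_real w) *s p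
     \<and> cpair p (vector [-\<i>, of_real w, of_real (\<alpha> * r)] :: complex^3) = 1" for p
    unfolding adj_vec_def jacE om qE ..
  have P3: "\<exists>p. adj_vec (jac (F \<epsilon>c) P0) \<omega>0 q p"
    unfolding adjE using adj_exists[OF rp zp ap wp hb hs ecE] .
  have PlG: "s^4 * (2 - 5 * \<beta> * z^2 - 2 * \<alpha>^2 * \<beta>^2) + s^2 * (2 * \<beta>^3 * z^2 + 3 * \<alpha>^2 * \<beta>^3 * z^2 - 4 * \<alpha>^2 * \<beta>^5 * z^2 - \<alpha>^4 * \<beta>^7 * z^2 - 5 * \<alpha>^2 * \<beta>^6 * z^4) + (-2 * \<alpha>^2 * \<beta>^4 * z^4 + 9 * \<alpha>^2 * \<beta>^6 * z^4 - 7 * \<alpha>^2 * \<beta>^8 * z^4) = s^2 * G1"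
  proof -
    have k: "\<kappa> = 1 / \<beta> - z^2" using z2 by simp
    have "s^4 = (s^2)^2" by (simp add: power2_eq_square power4_eq_xxxx mult_ac)
    then have s4: "s^4 = (1 - \<beta>^2)^2" unfolding s2 .
    show ?thesis unfolding G1_def k s4 s2 using bp by (simp add: field_simps) algebra
  qed
  have LY: "lyap1 (F \<epsilon>c) P0 \<omega>0 q p = 4 * \<alpha> * (s^2 * G1) / (\<beta> * z * (w^2 + \<epsilon>c^2) * (4 * w^2 + \<epsilon>c^2)) / (2 * w)"
    if "adj_vec (jac (F \<epsilon>c) P0) \<omega>0 q p" for p
  proof -
    have a: "transpose (cmat (Jm (w^2) \<epsilon>c (2 * z * \<beta> * s) (\<alpha> * s))) *v p = (-\<i> * of_real w) *s p"
      "cpair p (vector [-\<i>, of_real w, of_real (\<alpha> * r)] :: complex^3) = 1" using that unfolding adjE by auto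
    note AM = AlgMain[OF rp zp ap wp hb hs ecE a(1) a(2)]
    note CR = Core[OF rp zp ap wp hb hs ecE]
    show ?thesis unfolding lyap1_def G21_def Let_def jacE BF CF qE om cq AM CR PlG ..
  qed
  have d1: "w^2 + \<epsilon>c^2 > 0" "4 * w^2 + \<epsilon>c^2 > 0" using wp by (simp_all add: add_pos_nonneg)
  have Dp: "\<beta> * z * (w^2 + \<epsilon>c^2) * (4 * w^2 + \<epsilon>c^2) > 0" using bp zp d1 by simp
  have P4: "lyap1 (F \<epsilon>c) P0 \<omega>0 q p = 0 \<longleftrightarrow> G1 = 0" if "adj_vec (jac (F \<epsilon>c) P0) \<omega>0 q p" for p
    unfolding LY[OF that] using ap sp wp Dp bp zp d1 by simp
  have hopf: "hopf_jacobian (jac (F \<epsilon>c) P0) \<omega>0"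
    unfolding hopf_jacobian_def om
  proof (intro conjI allI impI)
    show "w > 0" by (rule wp)
    show "is_eigenvalue (cmat (jac (F \<epsilon>c) P0)) (\<i> * of_real w)"
      unfolding eigc using QS by (simp add: power2_eq_square power3_eq_cube)
    have "is_eigenvalue (cmat (jac (F \<epsilon>c) P0)) (\<i> * of_real (-w))"
      unfolding eigc using QS by (simp add: power2_eq_square power3_eq_cube)
    then show "is_eigenvalue (cmat (jac (F \<epsilon>c) P0)) (- \<i> * of_real w)" by simp
    fix \<mu> assume h: "is_eigenvalue (cmat (jac (F \<epsilon>c) P0)) \<mu> \<and> Re \<mu> = 0"
    have mu: "\<mu> = \<i> * of_real (Im \<mu>)" using h by (simp add: complex_eq_iff)
    have "(2 * z * \<beta> * s) * (\<alpha> * s) = \<epsilon>c * (Im \<mu>)^2" "w^2 * Im \<mu> = (Im \<mu>)^3"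
      using h mu eigc by metis+
    then have "Im \<mu> \<noteq> 0" "(Im \<mu>)^2 = w^2" using Kp by (auto simp: power2_eq_square power3_eq_cube)
    then have "Im \<mu> = w \<or> Im \<mu> = - w" using wp by (metis power2_eq_iff)
    then show "\<mu> = \<i> * of_real w \<or> \<mu> = - \<i> * of_real w" using mu by auto
  qed
  have trans: "transversal (\<lambda>\<epsilon>. jac (F \<epsilon>) P0) \<epsilon>c \<omega>0"
  proof -
    have "transversal (\<lambda>e. Jm (w^2) e (2 * z * \<beta> * s) (\<alpha> * s)) \<epsilon>c (sqrt (w^2))"
      by (rule transv_Jm) (use wp ecp nQ QS in auto)
    then show ?thesis unfolding jacE om using wp by simp
  qed
  show ?thesis using P1 P2 P3 P4 hopf trans by blast
qed


end
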